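(* Let $G$ be a finite simple graph and $A\subseteq V(G)$. If for every $S\subseteq V(G)$ we have $o_{G[A]}(G-S)\leq |S|$, then there exists a matching in $G$ that saturates every vertex of $A$.
   Context: For $S\subseteq V(G)$, $o_{G[A]}(G-S)$ denotes the number of connected components of $G-S$ that have an odd number of vertices and are contained in the induced subgraph $G[A]$ (i.e. whose vertex sets are subsets of $A$). *)

theory Defs
  imports Main
begin

definition simple_graph :: "'a set \<Rightarrow> 'a set set \<Rightarrow> bool" where
  "simple_graph V E \<longleftrightarrow> finite V \<and> (\<forall>e\<in>E. e \<subseteq> V \<and> card e = 2)"

definition induced_edges :: "'a set set \<Rightarrow> 'a set \<Rightarrow> 'a set set" where
  "induced_edges E X = {e \<in> E. e \<subseteq> X}"

definition reach_in :: "'a set \<Rightarrow> 'a set set \<Rightarrow> 'a \<Rightarrow> 'a \<Rightarrow> bool" where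
  "reach_in X E = (\<lambda>u v. u \<in> X \<and> v \<in> X \<and>
      (u, v) \<in> ({(x, y). {x, y} \<in> induced_edges E X})\<^sup>*)"

definition components :: "'a set \<Rightarrow> 'a set set \<Rightarrow> 'a set set" where
  "components X E = {{v. reach_in X E u v} | u. u \<in> X}"

text \<open>o_{G[A]}(G - S): number of odd components of G - S whose vertex set lies in A.\<close>
definition odd_comps_in :: "'a set \<Rightarrow> 'a set set \<Rightarrow> 'a set \<Rightarrow> 'a set \<Rightarrow> nat" where
  "odd_comps_in V E A S = card {C \<in> components (V - S) E. odd (card C) \<and> C \<subseteq> A}"

definition matching :: "'a set set \<Rightarrow> 'a set set \<Rightarrow> bool" where
  "matching E M \<longleftrightarrow> M \<subseteq> E \<and> (\<forall>e1\<in>M. \<forall>e2\<in>M. e1 \<noteq> e2 \<longrightarrow> e1 \<inter> e2 = {})"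

definition saturates :: "'a set set \<Rightarrow> 'a set \<Rightarrow> bool" where
  "saturates M A \<longleftrightarrow> (\<forall>v\<in>A. \<exists>e\<in>M. v \<in> e)"

end

theory Submission
  imports Defs
begin

definition maxm :: "'a set set \<Rightarrow> 'a set set \<Rightarrow> bool" where
  "maxm E M \<longleftrightarrow> matching E M \<and> (\<forall>M'. matching E M' \<longrightarrow> card M' \<le> card M)"

lemma matching_finite: "finite E \<Longrightarrow> matching E M \<Longrightarrow> finite M"
  unfolding matching_def using finite_subset by blast

lemma matching_subset: "matching E M \<Longrightarrow> N \<subseteq> M \<Longrightarrow> matching E N"
  unfolding matching_def by blast

lemma card_Union_matching:
  assumes "matching E M" "\<forall>e\<in>E. card e = 2"
  shows "card (\<Union>M) = 2 * card M"
proof -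
  have "card (\<Union>M) = sum card M"
  proof (rule card_Union_disjoint)
    show "pairwise disjnt M" using assms unfolding matching_def pairwise_def disjnt_def by blast
    fix A assume "A \<in> M" then have "card A = 2" using assms unfolding matching_def by blast
    then show "finite A" using card.infinite by fastforce
  qed
  also have "\<dots> = sum (\<lambda>_. 2) M" using assms unfolding matching_def by (intro sum.cong) auto
  finally show ?thesis by simp
qed

lemma ex_maxm:
  assumes "finite E" shows "\<exists>M. maxm E M"
proof -
  have "\<exists>M. matching E M \<and> (\<forall>M'. matching E M' \<longrightarrow> card M' \<le> card M)"
  proof (rule ex_has_greatest_nat[where k="{}" and b="Suc (card E)"])
    show "matching E {}" unfolding matching_def by simp
    show "\<forall>y. matching E y \<longrightarrow> card y < Suc (card E)"
    proof (intro allI impI)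
      fix y assume "matching E y"
      then have "y \<subseteq> E" unfolding matching_def by simp
      then show "card y < Suc (card E)" using card_mono[OF assms] by (simp add: le_imp_less_Suc)
    qed
  qed
  then show ?thesis unfolding maxm_def .
qed

lemma matching_insert:
  assumes "matching E M" "e \<in> E" "e \<inter> \<Union>M = {}"
  shows "matching E (insert e M)"
  using assms unfolding matching_def by blast

lemma maxm_no_aug:
  assumes "maxm E M" "e \<in> E" "e \<inter> \<Union>M = {}" "finite E" "card e = 2"
  shows False
proof -
  have "matching E (insert e M)" using assms matching_insert unfolding maxm_def by blast
  then have "card (insert e M) \<le> card M" using assms unfolding maxm_def by blast
  moreover have "e \<noteq> {}" using assms by auto
  then have "e \<notin> M" using assms by auto
  moreover have "finite M" using assms matching_finite unfolding maxm_def by blast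
  ultimately show False by simp
qed

lemma reach_in_refl: "u \<in> X \<Longrightarrow> reach_in X E u u"
  unfolding reach_in_def by simp

lemma reach_in_sym: assumes "reach_in X E u v" shows "reach_in X E v u"
proof -
  let ?R = "{(x, y). {x, y} \<in> induced_edges E X}"
  have "sym ?R" unfolding sym_def by (auto simp: insert_commute)
  then have "sym (?R\<^sup>*)" by (rule sym_rtrancl)
  then show ?thesis using assms unfolding reach_in_def sym_def by blast
qed

lemma reach_in_trans: "reach_in X E u v \<Longrightarrow> reach_in X E v w \<Longrightarrow> reach_in X E u w"
  unfolding reach_in_def by auto

lemma reach_in_step: "reach_in X E u v \<Longrightarrow> {v, w} \<in> E \<Longrightarrow> {v,w} \<subseteq> X \<Longrightarrow> reach_in X E u w"
  unfolding reach_in_def induced_edges_def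
  by (auto intro: rtrancl_into_rtrancl)

lemma reach_in_cong:
  assumes "induced_edges E X = induced_edges E' X"
  shows "reach_in X E = reach_in X E'"
  unfolding reach_in_def assms ..

lemma components_cong:
  assumes "induced_edges E X = induced_edges E' X"
  shows "components X E = components X E'"
  unfolding components_def reach_in_cong[OF assms] ..

lemma components_finite: "finite X \<Longrightarrow> finite (components X E)"
proof -
  assume "finite X"
  have "components X E \<subseteq> Pow X" unfolding components_def reach_in_def by auto
  then show ?thesis using \<open>finite X\<close> finite_subset by blast
qed

lemma reach_full:
  assumes "\<forall>e\<in>E. e \<subseteq> V"
  shows "reach_in V E u v \<longleftrightarrow> u \<in> V \<and> v \<in> V \<and> (u, v) \<in> {(x, y). {x, y} \<in> E}\<^sup>*"
proof -
  have "induced_edges E V = E" using assms unfolding induced_edges_def by auto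
  then show ?thesis unfolding reach_in_def by simp
qed

lemma card_diff_sym:
  assumes "finite A" "finite B" "card A = card B"
  shows "card (A - B) = card (B - A)"
proof -
  have "card (A - B) = card A - card (A \<inter> B)" using assms by (simp add: card_Diff_subset_Int)
  moreover have "card (B - A) = card B - card (B \<inter> A)" using assms by (simp add: card_Diff_subset_Int)
  ultimately show ?thesis using assms by (simp add: Int_commute)
qed

lemma card2_other:
  assumes "card e = 2" "x \<in> e"
  obtains y where "e = {x, y}" "x \<noteq> y"
proof -
  obtain a b where ab: "e = {a, b}" "a \<noteq> b" using assms(1) card_2_iff by metis
  show ?thesis
  proof (cases "x = a")
    case True then show ?thesis using ab that by blast
  next
    case False then have "x = b" using ab assms(2) by blast
    then show ?thesis using ab that by (metis insert_commute)
  qed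
qed

lemma maxm_card_eq: "maxm E M \<Longrightarrow> maxm E N \<Longrightarrow> card M = card N"
  unfolding maxm_def by (simp add: le_antisym)

lemma caseB_key:
  assumes fin: "finite V" and E: "\<forall>e\<in>E. e \<subseteq> V \<and> card e = 2"
    and B: "\<forall>t\<in>V. \<exists>N. maxm E N \<and> t \<notin> \<Union>N"
  shows "maxm E M \<Longrightarrow> u \<in> V \<Longrightarrow> v \<in> V \<Longrightarrow> u \<notin> \<Union>M \<Longrightarrow> v \<notin> \<Union>M \<Longrightarrow> u \<noteq> v
    \<Longrightarrow> (u, v) \<in> {(x,y). {x,y} \<in> E} ^^ k \<Longrightarrow> False"
proof (induction k arbitrary: M u v rule: less_induct)
  case (less k)
  let ?R = "{(x,y). {x,y} \<in> E}"
  have fE: "finite E"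
  proof -
    have "E \<subseteq> Pow V" using E by blast
    then show ?thesis using fin finite_subset by blast
  qed
  obtain n where k: "k = Suc n"
  proof (cases k)
    case 0 then show ?thesis using less.prems(6,7) by simp
  next
    case (Suc n) then show ?thesis using that by blast
  qed
  have "(u, v) \<in> ?R ^^ Suc n" using less.prems(7) k by simp
  from relpow_Suc_D2[OF this] obtain t where ut: "(u,t) \<in> ?R" and tv: "(t,v) \<in> ?R^^n"
    by blast
  have eut: "{u,t} \<in> E" using ut by simp
  have c2: "card {u,t} = 2" using eut E by blast
  have "t \<noteq> u"
  proof
    assume "t = u" then have "card {u,t} = 1" by simp
    then show False using c2 by simp
  qed
  have tV: "t \<in> V" using eut E by blast
  have "t \<noteq> v"
  proof
    assume "t = v"
    then have "{u,v} \<in> E" using eut by simp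
    moreover have "{u,v} \<inter> \<Union>M = {}" using less.prems(4,5) by auto
    moreover have "card {u,v} = 2" using \<open>t = v\<close> c2 by simp
    ultimately show False using maxm_no_aug[OF less.prems(1) _ _ fE] by blast
  qed
  have n0: "n \<noteq> 0"
  proof
    assume "n = 0" then show False using tv \<open>t \<noteq> v\<close> by simp
  qed
  have Mm: "maxm E M" by fact
  then have fM: "finite M" using matching_finite fE unfolding maxm_def by blast
  define P where "P N \<longleftrightarrow> maxm E N \<and> t \<notin> \<Union>N" for N
  obtain N0 where "P N0" using B tV P_def by blast
  have "\<exists>N. P N \<and> (\<forall>N'. P N' \<longrightarrow> card (M \<inter> N') \<le> card (M \<inter> N))"
  proof (rule ex_has_greatest_nat[where k=N0 and b="Suc (card M)"])
    show "P N0" by fact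
    show "\<forall>y. P y \<longrightarrow> card (M \<inter> y) < Suc (card M)"
    proof (intro allI impI)
      fix y have "card (M \<inter> y) \<le> card M" using fM by (intro card_mono) auto
      then show "card (M \<inter> y) < Suc (card M)" by simp
    qed
  qed
  then obtain N where PN: "P N" and Nmax: "\<forall>N'. P N' \<longrightarrow> card (M \<inter> N') \<le> card (M \<inter> N)"
    by blast
  have Nm: "maxm E N" and tN: "t \<notin> \<Union>N" using PN P_def by auto
  have fN: "finite N" using Nm matching_finite fE unfolding maxm_def by blast
  have uN: "u \<in> \<Union>N"
  proof (rule ccontr)
    assume a: "u \<notin> \<Union>N"
    have "(t,u) \<in> ?R^^1" using eut by (simp add: insert_commute)
    moreover have "1 < k" using k n0 by simp
    ultimately show False using less.IH[of 1 N t u] Nm tV less.prems(2) tN a \<open>t\<noteq>u\<close> by blast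
  qed
  have vN: "v \<in> \<Union>N"
  proof (rule ccontr)
    assume a: "v \<notin> \<Union>N"
    have "n < k" using k by simp
    then show False using less.IH[of n N t v] Nm tV less.prems(3) tN a \<open>t\<noteq>v\<close> tv by blast
  qed
  have E2: "\<forall>e\<in>E. card e = 2" using E by blast
  have cM: "card (\<Union>M) = 2 * card M" using card_Union_matching[OF _ E2] Mm unfolding maxm_def by blast
  have cN: "card (\<Union>N) = 2 * card N" using card_Union_matching[OF _ E2] Nm unfolding maxm_def by blast
  have cMN: "card M = card N" using maxm_card_eq[OF Mm Nm] .
  have EV: "\<Union>E \<subseteq> V" using E by auto
  have "M \<subseteq> E" using Mm unfolding maxm_def matching_def by simp
  then have UMV: "\<Union>M \<subseteq> V" using EV by auto
  have "N \<subseteq> E" using Nm unfolding maxm_def matching_def by simp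
  then have UNV: "\<Union>N \<subseteq> V" using EV by auto
  have fUM: "finite (\<Union>M)" using UMV fin finite_subset by blast
  have fUN: "finite (\<Union>N)" using UNV fin finite_subset by blast
  have "{u,v} \<subseteq> \<Union>N - \<Union>M" using uN vN less.prems(4,5) by blast
  then have "card {u,v} \<le> card (\<Union>N - \<Union>M)" using fUN by (intro card_mono) auto
  then have "2 \<le> card (\<Union>N - \<Union>M)" using less.prems(6) by simp
  moreover have "card (\<Union>M - \<Union>N) = card (\<Union>N - \<Union>M)"
    using card_diff_sym[OF fUM fUN] cM cN cMN by simp
  ultimately have "2 \<le> card (\<Union>M - \<Union>N)" by simp
  moreover have "card (\<Union>M - \<Union>N) - 1 \<le> card (\<Union>M - \<Union>N - {t})"
    using fUM by (simp add: card_Diff_singleton_if)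
  ultimately have "card (\<Union>M - \<Union>N - {t}) \<noteq> 0" by linarith
  then have "(\<Union>M - \<Union>N - {t}) \<noteq> {}" by (metis card.empty)
  then obtain x where xM: "x \<in> \<Union>M" and xN: "x \<notin> \<Union>N" and xt: "x \<noteq> t" by blast
  obtain e where eM: "e \<in> M" and xe: "x \<in> e" using xM by blast
  have eE: "e \<in> E" using eM Mm unfolding maxm_def matching_def by blast
  then have ce: "card e = 2" using E by blast
  obtain y where exy: "e = {x,y}" and xy: "x \<noteq> y" using card2_other[OF ce xe] by blast
  have yN: "y \<in> \<Union>N"
  proof (rule ccontr)
    assume "y \<notin> \<Union>N"
    then have "e \<inter> \<Union>N = {}" using xN exy by blast
    then show False using maxm_no_aug[OF Nm eE _ fE ce] by blast
  qed
  then obtain f where fN': "f \<in> N" and yf: "y \<in> f" by blast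
  have "f \<noteq> e" using xN fN' xe by blast
  have fnM: "f \<notin> M"
  proof
    assume "f \<in> M"
    then have "e \<inter> f = {}" using eM \<open>f \<noteq> e\<close> Mm unfolding maxm_def matching_def by blast
    then show False using yf exy by blast
  qed
  define N' where "N' = insert e (N - {f})"
  have mN: "matching E (N - {f})" using Nm matching_subset unfolding maxm_def by blast
  have "e \<inter> \<Union>(N - {f}) = {}"
  proof -
    have "g \<inter> e = {}" if g: "g \<in> N - {f}" for g
    proof -
      have "x \<notin> g" using xN g by blast
      moreover have "g \<inter> f = {}" using g fN' Nm unfolding maxm_def matching_def by blast
      then have "y \<notin> g" using yf by blast
      ultimately show ?thesis using exy by blast
    qed
    then show ?thesis by blast
  qed
  then have mN': "matching E N'" unfolding N'_def using matching_insert[OF mN eE] by blast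
  have eN: "e \<notin> N" using xN xe by blast
  have "card N' = card N"
  proof -
    have "card N' = Suc (card (N - {f}))" unfolding N'_def using eN fN by (simp)
    also have "\<dots> = card N" using fN fN' by (metis card_Suc_Diff1)
    finally show ?thesis .
  qed
  then have N'm: "maxm E N'" using mN' Nm unfolding maxm_def by simp
  have "t \<notin> e" using xt yN tN exy by blast
  then have "t \<notin> \<Union>N'" unfolding N'_def using tN by blast
  then have "P N'" using N'm P_def by blast
  have "M \<inter> N' = insert e (M \<inter> N)" unfolding N'_def using fnM eM by blast
  moreover have "e \<notin> M \<inter> N" using eN by blast
  ultimately have "card (M \<inter> N') = Suc (card (M \<inter> N))" using fM by simp
  then show False using Nmax \<open>P N'\<close> by fastforce
qed

lemma tutte_berge:
  "finite V \<Longrightarrow> \<forall>e\<in>E. e \<subseteq> V \<and> card e = 2 \<Longrightarrow>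
   \<exists>U M. U \<subseteq> V \<and> matching E M \<and>
     card V + card U \<le> card {C \<in> components (V - U) E. odd (card C)} + 2 * card M"
proof (induction "card V" arbitrary: V E rule: less_induct)
  case less
  note fin = less.prems(1) and E = less.prems(2)
  have fE: "finite E"
  proof -
    have "E \<subseteq> Pow V" using E by blast
    then show ?thesis using fin finite_subset by blast
  qed
  obtain M0 where M0: "maxm E M0" using ex_maxm fE by blast
  have E2: "\<forall>e\<in>E. card e = 2" using E by blast
  have EV: "\<Union>E \<subseteq> V" using E by auto
  have M0E: "M0 \<subseteq> E" using M0 unfolding maxm_def matching_def by simp
  then have UM0V: "\<Union>M0 \<subseteq> V" using EV by auto
  show ?case
  proof (cases "\<exists>v\<in>V. \<forall>M. maxm E M \<longrightarrow> v \<in> \<Union>M")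
    case True
    then obtain v where vV: "v \<in> V" and vall: "\<forall>M. maxm E M \<longrightarrow> v \<in> \<Union>M" by blast
    define V' where "V' = V - {v}"
    define E' where "E' = {e\<in>E. v \<notin> e}"
    have lt: "card V' < card V" using vV fin unfolding V'_def by (metis card_Diff1_less)
    have fV': "finite V'" using fin unfolding V'_def by simp
    have E'': "\<forall>e\<in>E'. e \<subseteq> V' \<and> card e = 2" unfolding E'_def V'_def using E by blast
    obtain U' M' where U': "U' \<subseteq> V'" and mM': "matching E' M'"
      and ineq: "card V' + card U' \<le> card {C \<in> components (V' - U') E'. odd (card C)} + 2 * card M'"
      using less(1)[OF lt fV' E''] by blast
    have "M' \<subseteq> E'" using mM' unfolding matching_def by simp
    then have M'E: "M' \<subseteq> E" unfolding E'_def by blast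
    have mM'E: "matching E M'" using mM' M'E unfolding matching_def by blast
    have vM': "v \<notin> \<Union>M'" using \<open>M' \<subseteq> E'\<close> unfolding E'_def by blast
    have "card M' < card M0"
    proof (rule ccontr)
      assume "\<not> card M' < card M0"
      then have "maxm E M'" using M0 mM'E unfolding maxm_def by auto
      then show False using vall vM' by blast
    qed
    let ?U = "insert v U'"
    have XU: "V - ?U = V' - U'" unfolding V'_def by blast
    have ie: "induced_edges E' (V' - U') = induced_edges E (V' - U')"
      unfolding induced_edges_def E'_def V'_def by blast
    have comps: "components (V - ?U) E = components (V' - U') E'"
      using components_cong[OF ie] XU by simp
    have fU': "finite U'" using U' fV' finite_subset by blast
    have "v \<notin> U'" using U' unfolding V'_def by blast
    then have cU: "card ?U = Suc (card U')" using fU' by simp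
    have cV: "card V = Suc (card V')" using vV fin unfolding V'_def by (metis card_Suc_Diff1)
    have UV: "?U \<subseteq> V" using U' vV unfolding V'_def by blast
    have "card V + card ?U \<le> card {C \<in> components (V - ?U) E. odd (card C)} + 2 * card M0"
      using ineq comps cU cV \<open>card M' < card M0\<close> by simp
    then show ?thesis using UV M0 unfolding maxm_def by blast
  next
    case False
    then have B: "\<forall>t\<in>V. \<exists>N. maxm E N \<and> t \<notin> \<Union>N" by blast
    define miss where "miss = V - \<Union>M0"
    define comp where "comp u = {w. reach_in V E u w}" for u
    have EV': "\<forall>e\<in>E. e \<subseteq> V" using E by blast
    have key: "u = w" if u: "u \<in> miss" and w: "w \<in> miss" and r: "reach_in V E u w" for u w
    proof (rule ccontr)
      assume "u \<noteq> w"
      from r have "(u, w) \<in> {(x, y). {x, y} \<in> E}\<^sup>*" using reach_full[OF EV'] by blast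
      then obtain k where "(u, w) \<in> {(x, y). {x, y} \<in> E} ^^ k" using rtrancl_power by blast
      then show False using caseB_key[OF fin E B M0, of u w k] u w \<open>u \<noteq> w\<close> unfolding miss_def by blast
    qed
    have fUM0: "finite (\<Union>M0)" using UM0V fin finite_subset by blast
    have cUM: "card (\<Union>M0) = 2 * card M0" using card_Union_matching[OF _ E2] M0 unfolding maxm_def by blast
    have cardV: "card V = 2 * card M0 + card miss"
    proof -
      have "card miss = card V - card (\<Union>M0)" unfolding miss_def using card_Diff_subset[OF fUM0 UM0V] .
      moreover have "card (\<Union>M0) \<le> card V" using card_mono[OF fin UM0V] .
      ultimately show ?thesis using cUM by simp
    qed
    have inj: "inj_on comp miss"
    proof (rule inj_onI)
      fix u w assume u: "u \<in> miss" and w: "w \<in> miss" and eq: "comp u = comp w"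
      have "w \<in> comp w" unfolding comp_def using w unfolding miss_def by (simp add: reach_in_refl)
      then have "w \<in> comp u" using eq by simp
      then have "reach_in V E u w" unfolding comp_def by simp
      then show "u = w" using key u w by blast
    qed
    have img: "comp ` miss \<subseteq> {C \<in> components (V - {}) E. odd (card C)}"
    proof
      fix C assume "C \<in> comp ` miss"
      then obtain u where u: "u \<in> miss" and C: "C = comp u" by blast
      have uV: "u \<in> V" using u unfolding miss_def by blast
      have Ccomp: "C \<in> components (V - {}) E" unfolding components_def C comp_def using uV by auto
      have CV: "C \<subseteq> V" unfolding C comp_def reach_in_def by blast
      have fC: "finite C" using CV fin finite_subset by blast
      have uC: "u \<in> C" unfolding C comp_def using uV by (simp add: reach_in_refl)
      have eq: "C - {u} = \<Union>{e\<in>M0. e \<subseteq> C}"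
      proof
        show "C - {u} \<subseteq> \<Union>{e\<in>M0. e \<subseteq> C}"
        proof
          fix p assume p: "p \<in> C - {u}"
          then have rp: "reach_in V E u p" unfolding C comp_def by simp
          have pV: "p \<in> V" using p CV by blast
          have "p \<notin> miss" using key[OF u _ rp] p by blast
          then obtain e where eM: "e \<in> M0" and pe: "p \<in> e" using pV unfolding miss_def by blast
          have eE: "e \<in> E" using eM M0E by blast
          obtain q where epq: "e = {p, q}" and "p \<noteq> q" using card2_other[of e p] E2 eE pe by blast
          have "{p, q} \<subseteq> V" using eE epq EV by blast
          then have "reach_in V E u q" using reach_in_step[OF rp] eE epq by blast
          then have "e \<subseteq> C" using p epq unfolding C comp_def by blast
          then show "p \<in> \<Union>{e\<in>M0. e \<subseteq> C}" using eM pe by blast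
        qed
        show "\<Union>{e\<in>M0. e \<subseteq> C} \<subseteq> C - {u}" using u unfolding miss_def by blast
      qed
      have mM0: "matching E M0" using M0 unfolding maxm_def by simp
      have "matching E {e\<in>M0. e \<subseteq> C}" by (rule matching_subset[OF mM0]) auto
      then have "card (\<Union>{e\<in>M0. e \<subseteq> C}) = 2 * card {e\<in>M0. e \<subseteq> C}"
        using card_Union_matching[OF _ E2] by blast
      moreover have "card C = Suc (card (C - {u}))" using fC uC by (metis card_Suc_Diff1)
      ultimately have "odd (card C)" using eq by simp
      then show "C \<in> {C \<in> components (V - {}) E. odd (card C)}" using Ccomp by blast
    qed
    have fo: "finite {C \<in> components (V - {}) E. odd (card C)}"
      using components_finite[of "V - {}" E] fin by simp
    have "card miss \<le> card {C \<in> components (V - {}) E. odd (card C)}"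
      using card_inj_on_le[OF inj img fo] .
    then have "card V + card ({}::'a set) \<le> card {C \<in> components (V - {}) E. odd (card C)} + 2 * card M0"
      using cardV by simp
    then show ?thesis using M0 unfolding maxm_def by blast
  qed
qed

lemma components_eq:
  assumes "C \<in> components X E" "q \<in> C"
  shows "C = {w. reach_in X E q w}"
proof -
  obtain p where p: "p \<in> X" and C: "C = {w. reach_in X E p w}"
    using assms(1) unfolding components_def by blast
  have pq: "reach_in X E p q" using assms(2) C by simp
  have "reach_in X E p w \<longleftrightarrow> reach_in X E q w" for w
    using pq reach_in_sym reach_in_trans by metis
  then show ?thesis using C by simp
qed

lemma components_sub: "C \<in> components X E \<Longrightarrow> C \<subseteq> X"
  unfolding components_def reach_in_def by blast

theorem lemma2p2:
  fixes V :: "'a set" and E :: "'a set set" and A :: "'a set"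
  assumes "simple_graph V E"
    and "A \<subseteq> V"
    and "\<forall>S \<subseteq> V. odd_comps_in V E A S \<le> card S"
  shows "\<exists>M. matching E M \<and> saturates M A"
proof -
  have fin: "finite V" and Eok: "\<forall>e\<in>E. e \<subseteq> V \<and> card e = 2"
    using assms(1) unfolding simple_graph_def by auto
  note AV = assms(2) and cond = assms(3)
  define V2 :: "'a option set" where "V2 = Some ` V \<union> (if even (card V) then {} else {None})"
  define W where "W = V2 - Some ` A"
  define E2 where "E2 = (\<lambda>e. Some ` e) ` E \<union> {{p,q} | p q. p \<in> W \<and> q \<in> W \<and> p \<noteq> q}"
  have inj: "inj Some" by (simp add: inj_def)
  have fin2: "finite V2" unfolding V2_def using fin by simp
  have cS: "card (Some ` X) = card X" for X :: "'a set" using inj by (simp add: card_image inj_on_def)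
  have E2ok: "\<forall>e\<in>E2. e \<subseteq> V2 \<and> card e = 2"
  proof
    fix e assume "e \<in> E2"
    then consider (img) e0 where "e0 \<in> E" "e = Some ` e0"
      | (cl) p q where "p \<in> W" "q \<in> W" "p \<noteq> q" "e = {p,q}"
      unfolding E2_def by blast
    then show "e \<subseteq> V2 \<and> card e = 2"
    proof cases
      case img
      then show ?thesis using Eok cS unfolding V2_def by auto
    next
      case cl
      then show ?thesis unfolding W_def by auto
    qed
  qed
  have evV2: "even (card V2)"
  proof (cases "even (card V)")
    case True then show ?thesis unfolding V2_def using cS by simp
  next
    case False
    have "None \<notin> Some ` V" by blast
    then have "card V2 = Suc (card (Some ` V))" unfolding V2_def using False fin by simp
    then show ?thesis using cS False by simp
  qed
  obtain U2 M2 where U2: "U2 \<subseteq> V2" and mM2: "matching E2 M2"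
    and ineq: "card V2 + card U2 \<le> card {C \<in> components (V2 - U2) E2. odd (card C)} + 2 * card M2"
    using tutte_berge[OF fin2 E2ok] by blast
  define X where "X = V2 - U2"
  define U where "U = {a \<in> V. Some a \<in> U2}"
  have UV: "U \<subseteq> V" unfolding U_def by blast
  have cU: "card U \<le> card U2"
  proof -
    have "Some ` U \<subseteq> U2" unfolding U_def by blast
    moreover have "finite U2" using U2 fin2 finite_subset by blast
    ultimately have "card (Some ` U) \<le> card U2" by (simp add: card_mono)
    then show ?thesis using cS by simp
  qed
  define O2 where "O2 = {C \<in> components X E2. odd (card C)}"
  define OA where "OA = {C \<in> O2. C \<subseteq> Some ` A}"
  define ON where "ON = {C \<in> O2. \<not> C \<subseteq> Some ` A}"
  have fO2: "finite O2" unfolding O2_def using components_finite[of X E2] fin2 unfolding X_def by simp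
  have O2split: "O2 = OA \<union> ON" "OA \<inter> ON = {}" unfolding OA_def ON_def by blast+
  have cO2: "card O2 = card OA + card ON"
    using O2split fO2 card_Un_disjoint[of OA ON] by (metis finite_Un)
  have cON: "card ON \<le> 1"
  proof -
    have "C1 = C2" if C1: "C1 \<in> ON" and C2: "C2 \<in> ON" for C1 C2
    proof -
      obtain q1 where q1: "q1 \<in> C1" "q1 \<notin> Some ` A" using C1 unfolding ON_def by blast
      obtain q2 where q2: "q2 \<in> C2" "q2 \<notin> Some ` A" using C2 unfolding ON_def by blast
      have C1c: "C1 \<in> components X E2" using C1 unfolding ON_def O2_def by blast
      have C2c: "C2 \<in> components X E2" using C2 unfolding ON_def O2_def by blast
      have q1X: "q1 \<in> X" using components_sub[OF C1c] q1 by blast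
      have q2X: "q2 \<in> X" using components_sub[OF C2c] q2 by blast
      have e1: "C1 = {w. reach_in X E2 q1 w}" using components_eq[OF C1c q1(1)] .
      have e2: "C2 = {w. reach_in X E2 q2 w}" using components_eq[OF C2c q2(1)] .
      show ?thesis
      proof (cases "q1 = q2")
        case True then show ?thesis using e1 e2 by simp
      next
        case False
        have "q1 \<in> W" "q2 \<in> W" using q1X q2X q1(2) q2(2) unfolding X_def W_def by auto
        then have "{q1, q2} \<in> E2" unfolding E2_def using False by blast
        moreover have "{q1, q2} \<subseteq> X" using q1X q2X by blast
        ultimately have "reach_in X E2 q1 q2" using reach_in_step[OF reach_in_refl[OF q1X]] by blast
        then have "q2 \<in> C1" using e1 by simp
        then have "C1 = {w. reach_in X E2 q2 w}" using components_eq[OF C1c] by blast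
        then show ?thesis using e2 by simp
      qed
    qed
    moreover have "finite ON" using fO2 O2split by simp
    ultimately show ?thesis using card_le_Suc0_iff_eq by (metis One_nat_def)
  qed
  define f :: "'a option set \<Rightarrow> 'a set" where "f C = {a. Some a \<in> C}" for C
  have OAprop: "f C \<in> {C' \<in> components (V - U) E. odd (card C') \<and> C' \<subseteq> A}
       \<and> C = Some ` f C" if C: "C \<in> OA" for C
  proof -
    have Cc: "C \<in> components X E2" and oC: "odd (card C)" and CA: "C \<subseteq> Some ` A"
      using C unfolding OA_def O2_def by auto
    obtain p where p: "p \<in> X" and Cp: "C = {w. reach_in X E2 p w}"
      using Cc unfolding components_def by blast
    have "p \<in> C" using Cp p reach_in_refl by fastforce
    then obtain a where pa: "p = Some a" and aA: "a \<in> A" using CA by blast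
    have CSf: "C = Some ` f C" using CA unfolding f_def by blast
    have SX: "b \<in> V - U" if "Some b \<in> X" for b
      using that unfolding X_def V2_def U_def by (auto split: if_splits)
    have aVU: "a \<in> V - U" using SX p pa by simp
    have fC: "f C = {b. reach_in (V - U) E a b}"
    proof
      show "f C \<subseteq> {b. reach_in (V - U) E a b}"
      proof
        fix b assume "b \<in> f C"
        then have "reach_in X E2 (Some a) (Some b)" unfolding f_def Cp pa by simp
        then have rt: "(Some a, Some b) \<in> {(x, y). {x, y} \<in> induced_edges E2 X}\<^sup>*"
          unfolding reach_in_def by blast
        have "\<forall>q. q = Some b \<longrightarrow> reach_in (V - U) E a b" 
        proof -
          have "\<exists>b'. q = Some b' \<and> reach_in (V - U) E a b'" 
            if "(Some a, q) \<in> {(x, y). {x, y} \<in> induced_edges E2 X}\<^sup>*" for q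
            using that
          proof (induction rule: rtrancl_induct)
            case base
            then show ?case using reach_in_refl[OF aVU] by blast
          next
            case (step q1 q2)
            obtain b1 where b1: "q1 = Some b1" and rb1: "reach_in (V - U) E a b1" using step.IH by blast
            have ed: "{q1, q2} \<in> E2" "{q1, q2} \<subseteq> X" using step.hyps(2) unfolding induced_edges_def by auto
            have "reach_in X E2 p q2" using step.hyps p ed unfolding reach_in_def pa
              by (auto intro: rtrancl_into_rtrancl)
            then have "q2 \<in> C" using Cp by simp
            then obtain b2 where b2: "q2 = Some b2" and b2A: "b2 \<in> A" using CA by blast
            have "{q1, q2} \<notin> {{p,q} | p q. p \<in> W \<and> q \<in> W \<and> p \<noteq> q}"
            proof
              assume "{q1, q2} \<in> {{p,q} | p q. p \<in> W \<and> q \<in> W \<and> p \<noteq> q}"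
              then obtain pp qq where "{q1, q2} = {pp, qq}" "pp \<in> W" "qq \<in> W" by blast
              moreover have "q2 \<in> {q1, q2}" by simp
              ultimately have "q2 \<in> W" by (metis insertE singletonD)
              then show False using b2 b2A unfolding W_def by blast
            qed
            then obtain e0 where e0: "e0 \<in> E" "Some ` e0 = {q1, q2}" using ed(1) unfolding E2_def by blast
            have "Some ` e0 = Some ` {b1, b2}" using e0 b1 b2 by simp
            then have "e0 = {b1, b2}" using inj_image_eq_iff[OF inj] by blast
            then have "{b1, b2} \<in> E" using e0 by simp
            moreover have "{b1, b2} \<subseteq> V - U" using ed(2) b1 b2 SX by blast
            ultimately have "reach_in (V - U) E a b2" using reach_in_step[OF rb1] by blast
            then show ?case using b2 by blast
          qed
          then show ?thesis using rt by blast
        qed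
        then show "b \<in> {b. reach_in (V - U) E a b}" by blast
      qed
      show "{b. reach_in (V - U) E a b} \<subseteq> f C"
      proof
        fix b assume "b \<in> {b. reach_in (V - U) E a b}"
        then have rt: "(a, b) \<in> {(x, y). {x, y} \<in> induced_edges E (V - U)}\<^sup>*"
          and bVU: "b \<in> V - U" unfolding reach_in_def by auto
        have SXi: "Some c \<in> X" if "c \<in> V - U" for c
          using that unfolding X_def V2_def U_def by auto
        have "reach_in X E2 (Some a) (Some b)"
          using rt
        proof (induction rule: rtrancl_induct)
          case base
          then show ?case using reach_in_refl[OF SXi[OF aVU]] .
        next
          case (step b1 b2)
          have ed: "{b1, b2} \<in> E" "{b1, b2} \<subseteq> V - U" using step.hyps(2) unfolding induced_edges_def by auto
          have "Some ` {b1, b2} \<in> E2" using ed(1) unfolding E2_def by blast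
          then have "{Some b1, Some b2} \<in> E2" by simp
          moreover have "{Some b1, Some b2} \<subseteq> X" using ed(2) SXi by blast
          ultimately show ?case using reach_in_step[OF step.IH] by blast
        qed
        then show "b \<in> f C" unfolding f_def Cp pa by simp
      qed
    qed
    have "f C \<in> components (V - U) E" unfolding components_def fC using aVU by blast
    moreover have "odd (card (f C))" using oC CSf cS by metis
    moreover have "f C \<subseteq> A" using CA unfolding f_def by blast
    ultimately show ?thesis using CSf by blast
  qed
  have cOA: "card OA \<le> odd_comps_in V E A U"
  proof -
    have "inj_on f OA"
    proof (rule inj_onI)
      fix C1 C2 assume "C1 \<in> OA" "C2 \<in> OA" "f C1 = f C2"
      then show "C1 = C2" using OAprop by metis
    qed
    moreover have "f ` OA \<subseteq> {C' \<in> components (V - U) E. odd (card C') \<and> C' \<subseteq> A}"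
      using OAprop by blast
    moreover have "finite {C' \<in> components (V - U) E. odd (card C') \<and> C' \<subseteq> A}"
      using components_finite[of "V - U" E] fin by simp
    ultimately show ?thesis unfolding odd_comps_in_def by (rule card_inj_on_le)
  qed
  have "odd_comps_in V E A U \<le> card U" using cond UV by blast
  then have "card O2 \<le> card U2 + 1" using cO2 cON cOA cU by linarith
  then have le1: "card V2 \<le> 2 * card M2 + 1" using ineq unfolding O2_def X_def by linarith
  have E22: "\<forall>e\<in>E2. card e = 2" using E2ok by blast
  have cUM2: "card (\<Union>M2) = 2 * card M2" using card_Union_matching[OF mM2 E22] .
  have UM2V: "\<Union>M2 \<subseteq> V2" using mM2 E2ok unfolding matching_def by blast
  have "card (\<Union>M2) \<le> card V2" using card_mono[OF fin2 UM2V] .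
  then have "card (\<Union>M2) = card V2" using le1 evV2 cUM2 by presburger
  then have coverV2: "\<Union>M2 = V2" using card_subset_eq[OF fin2 UM2V] by blast
  define M where "M = {e \<in> E. Some ` e \<in> M2}"
  have "matching E M"
    unfolding matching_def
  proof (intro conjI ballI impI)
    show "M \<subseteq> E" unfolding M_def by blast
    fix e1 e2 assume e1: "e1 \<in> M" and e2: "e2 \<in> M" and ne: "e1 \<noteq> e2"
    have "Some ` e1 \<noteq> Some ` e2" using ne inj_image_eq_iff[OF inj] by blast
    then have "Some ` e1 \<inter> Some ` e2 = {}" using e1 e2 mM2 unfolding M_def matching_def by blast
    then show "e1 \<inter> e2 = {}" by blast
  qed
  moreover have "saturates M A"
    unfolding saturates_def
  proof
    fix a assume aA: "a \<in> A"
    then have "Some a \<in> V2" using AV unfolding V2_def by blast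
    then obtain e2 where e2: "e2 \<in> M2" "Some a \<in> e2" using coverV2 by blast
    have "e2 \<in> E2" using e2 mM2 unfolding matching_def by blast
    moreover have "e2 \<notin> {{p,q} | p q. p \<in> W \<and> q \<in> W \<and> p \<noteq> q}"
    proof
      assume "e2 \<in> {{p,q} | p q. p \<in> W \<and> q \<in> W \<and> p \<noteq> q}"
      then obtain pp qq where "e2 = {pp, qq}" "pp \<in> W" "qq \<in> W" by blast
      then have "Some a \<in> W" using e2 by (metis insertE singletonD)
      then show False using aA unfolding W_def by blast
    qed
    ultimately obtain e0 where e0: "e0 \<in> E" "e2 = Some ` e0" unfolding E2_def by blast
    then have "e0 \<in> M" "a \<in> e0" using e2 unfolding M_def by auto
    then show "\<exists>e\<in>M. a \<in> e" by blast
  qed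
  ultimately show ?thesis by blast
qed

end
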